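(* Let $n>k\geq1$, $r=n-k$, and let $h,d$ be integers with $2\leq h\leq n-k$, $k<d\leq n-h$, $(d-k)\mid h$ and $(\frac{h}{d-k}+1)\mid 2^n$. Put $\delta=d-k$, $N=h/\delta$ (so $N=2^w-1$ for some integer $w\geq1$) and $\ell=2^n$. Let $F$ be a finite field with $|F|>2n$ and $\lambda_{j,0},\lambda_{j,1}$, $j\in[n]$, be $2n$ distinct elements of $F$, and let $\mathcal{C}$ be the (Hadamard MSR) code of all $(\bm c_1,\ldots,\bm c_n)$, $\bm c_j=(c_{j,0},\ldots,c_{j,\ell-1})\in F^\ell$, with $\sum_{j\in[n]}\lambda_{j,a_j}^{t-1}c_{j,a}=0$ for all $a\in[0,\ell-1]$, $t\in[r]$. Let $\mathcal{H}\subseteq[n]$ with $|\mathcal{H}|=h$ be the set of failed nodes and $\mathcal{R}\subseteq[n]\setminus\mathcal{H}$ with $|\mathcal{R}|=d$ the helper nodes. Partition $\mathcal{H}$ into disjoint sets $P_1,\ldots,P_N$ of size $\delta$, pick $m_i\in P_i$ for each $i\in[N]$, let $M=(m_1,\ldots,m_N)$, and let $V_0\subseteq\mathbb{F}_2^N$ be the binary Hamming code of length $N$ (dimension $N-w$, minimum distance $3$). Then every codeword's $\bm c_j$, $j\in\mathcal{H}$, can be recovered from the symbols $$\Big\{\sum_{v\in\{0,1\}}c_{j,\,a(P_i,a|_{P_i}\oplus v\bm 1_\delta)}:\ a\in[0,\ell-1]\text{ with }a|_M\in V_0,\ i\in[N]\Big\}$$ downloaded from each helper node $j\in\mathcal{R}$;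 this amounts to $\frac{h\ell}{d-k+h}$ symbols per helper node and total repair bandwidth $\frac{dh\ell}{d-k+h}$, achieving the cut-set bound. In particular $\mathcal{C}$ has the $(h,d)$-optimal repair property.
   Context: Each $a\in[0,2^n-1]$ is identified with its binary expansion $(a_1,\ldots,a_n)\in\{0,1\}^n$, $a=\sum_i a_i2^{i-1}$. For $\mathcal{X}\subseteq[n]$, $a|_{\mathcal{X}}$ is the vector of bits $(a_x)_{x\in\mathcal{X}}$ (for $M=(m_1,\ldots,m_N)$, $a|_M=(a_{m_1},\ldots,a_{m_N})\in\mathbb{F}_2^N$), and $a(\mathcal{X},\bm v)$ is the integer whose bits on $\mathcal{X}$ equal $\bm v$ and whose other bits equal those of $a$; $\oplus$ is bitwise addition mod 2 and $\bm 1_\delta$ is the all-one vector of length $\delta$. The binary Hamming code of length $N=2^w-1$ is the kernel of the $w\times N$ binary matrix whose columns are all nonzero vectors of $\mathbb{F}_2^w$. The cut-set bound for repairing $h$ nodes from $d$ helpers in an $(n,k,\ell)$ MDS array code is that each helper must send at least $\frac{h\ell}{d-k+h}$ symbols; the $(h,d)$-optimal repair property means that for every $h$-set $\mathcal{H}$ and every $d$-set $\mathcal{R}\subseteq[n]\setminus\mathcal{H}$ the failed nodes can be recovered with each helper sending exactly $\frac{h\ell}{d-k+h}$ symbols computed from its own content. *)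

theory Defs
  imports Complex_Main
begin

text \<open>Bit i (1-based, i in [n]) of the integer a = sum_i a_i 2^(i-1).\<close>
definition bitv :: "nat \<Rightarrow> nat \<Rightarrow> nat" where
  "bitv a i = (a div 2 ^ (i - 1)) mod 2"

text \<open>a(X, v): the integer in [0,2^n-1] whose bits on X are given by g and whose
  other bits equal those of a.\<close>
definition set_bits :: "nat \<Rightarrow> nat \<Rightarrow> nat set \<Rightarrow> (nat \<Rightarrow> nat) \<Rightarrow> nat" where
  "set_bits n a X g = (\<Sum>i\<in>{1..n}. (if i \<in> X then g i else bitv a i) * 2 ^ (i - 1))"

text \<open>Hadamard MSR code: codewords c, with c j the content (c_{j,0},...,c_{j,l-1}) of node j;
  entries outside j in [n], a in [0,2^n-1] are fixed to 0.\<close>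
definition hadamard_msr_code ::
  "nat \<Rightarrow> nat \<Rightarrow> (nat \<Rightarrow> nat \<Rightarrow> 'a::field) \<Rightarrow> (nat \<Rightarrow> nat \<Rightarrow> 'a) set" where
  "hadamard_msr_code n k lam =
    {c. (\<forall>j a. (j \<notin> {1..n} \<or> a \<ge> 2 ^ n) \<longrightarrow> c j a = 0) \<and>
        (\<forall>a < 2 ^ n. \<forall>t \<in> {1..n - k}.
           (\<Sum>j\<in>{1..n}. lam j (bitv a j) ^ (t - 1) * c j a) = 0)}"

text \<open>Binary Hamming code of length N = 2^w - 1: kernel of the w x N parity-check matrix
  whose i-th column is the binary expansion of col i; col enumerates all nonzero vectors of
  F_2^w (i.e. col is a bijection of [N] onto [1, 2^w-1]). Vectors of F_2^N are
  functions x with x i in {0,1} for i in [N].\<close>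
definition hamming_code :: "nat \<Rightarrow> (nat \<Rightarrow> nat) \<Rightarrow> (nat \<Rightarrow> nat) set" where
  "hamming_code w col =
    {x. (\<forall>i\<in>{1..2 ^ w - 1}. x i \<in> {0, 1}) \<and>
        (\<forall>s < w. even (\<Sum>i\<in>{1..2 ^ w - 1}. x i * ((col i div 2 ^ s) mod 2)))}"

text \<open>(h,d)-optimal repair property of an (n,k,l) array code C: for every h-set H of failed
  nodes and every d-set R of helpers disjoint from H, there are s = h l/(d-k+h) symbols
  per helper, each computed (by g j) from the helper's own content, from which the
  failed nodes are determined.\<close>
definition hd_optimal_repair ::
  "nat \<Rightarrow> nat \<Rightarrow> nat \<Rightarrow> nat \<Rightarrow> nat \<Rightarrow> (nat \<Rightarrow> nat \<Rightarrow> 'a) set \<Rightarrow> bool" where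
  "hd_optimal_repair n k l h d C \<longleftrightarrow>
    (\<forall>H R. H \<subseteq> {1..n} \<and> card H = h \<and> R \<subseteq> {1..n} - H \<and> card R = d \<longrightarrow>
      (\<exists>(s::nat) (g :: nat \<Rightarrow> (nat \<Rightarrow> 'a) \<Rightarrow> nat \<Rightarrow> 'a).
         real s = real h * real l / (real d - real k + real h) \<and>
         (\<forall>c\<in>C. \<forall>c'\<in>C.
            (\<forall>j\<in>R. \<forall>t<s. g j (c j) t = g j (c' j) t) \<longrightarrow> (\<forall>j\<in>H. c j = c' j))))"

end

theory Submission imports Defs "HOL-Computational_Algebra.Polynomial" begin

lemma bitv_le1: "bitv a i \<le> 1"
  unfolding bitv_def by simp

lemma bitv_01: "bitv a i \<in> {0,1}"
  unfolding bitv_def by auto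

lemma bitv_bit: "bitv a (Suc i) = (if bit a i then 1 else 0)"
  unfolding bitv_def by (simp add: bit_iff_odd odd_iff_mod_2_eq_one)

lemma digits_lt:
  "(\<forall>i\<in>{1..n}. f i \<le> (1::nat)) \<Longrightarrow> (\<Sum>i\<in>{1..n}. f i * 2^(i-1)) < 2^n"
proof (induction n)
  case 0 then show ?case by simp
next
  case (Suc n)
  have "(\<Sum>i\<in>{1..Suc n}. f i * 2^(i-1)) = (\<Sum>i\<in>{1..n}. f i * 2^(i-1)) + f (Suc n) * 2^n"
    by simp
  also have "\<dots> < 2^n + 2^n"
    using Suc by (intro add_less_le_mono) auto
  finally show ?case by simp
qed

lemma digits_bit:
  "(\<forall>i\<in>{1..n}. f i \<le> (1::nat)) \<Longrightarrow> i \<in> {1..n} \<Longrightarrow> bitv (\<Sum>i\<in>{1..n}. f i * 2^(i-1)) i = f i"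
proof (induction n arbitrary: i)
  case 0 then show ?case by simp
next
  case (Suc n)
  define S where "S = (\<Sum>i\<in>{1..n}. f i * 2^(i-1))"
  have SL: "S < 2^n" unfolding S_def using Suc.prems by (intro digits_lt) auto
  have eq: "(\<Sum>i\<in>{1..Suc n}. f i * 2^(i-1)) = S + f (Suc n) * 2^n"
    by (simp add: S_def)
  show ?case
  proof (cases "i = Suc n")
    case True
    have "(S + f (Suc n) * 2^n) div 2^n = f (Suc n)"
      using SL by simp
    moreover have "f (Suc n) \<le> 1" using Suc.prems by auto
    ultimately show ?thesis using True eq unfolding bitv_def by simp
  next
    case False
    then have i: "i \<in> {1..n}" using Suc.prems by auto
    have p: "(2::nat)^n = 2^(i-1) * 2 * 2^(n-i)"
    proof -
      have "n = (i - 1) + 1 + (n - i)" using i by auto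
      then have "(2::nat)^n = 2^((i - 1) + 1 + (n - i))" by simp
      then show ?thesis by (simp only: power_add power_one_right)
    qed
    have D: "(S + f (Suc n) * 2^n) div 2^(i-1) = S div 2^(i-1) + 2 * (f (Suc n) * 2^(n-i))"
    proof -
      have E: "f (Suc n) * 2^n = (2 * (f (Suc n) * 2^(n-i))) * 2^(i-1)"
        unfolding p by (simp add: ac_simps)
      have G: "(S + X * 2^(i-1)) div 2^(i-1) = S div 2^(i-1) + X" for X :: nat by simp
      show ?thesis unfolding E by (rule G)
    qed
    have M: "(S div 2^(i-1) + 2 * Y) mod 2 = S div 2^(i-1) mod 2" for Y :: nat by simp
    have "bitv (S + f (Suc n) * 2^n) i = bitv S i"
      unfolding bitv_def D by (rule M)
    also have "\<dots> = f i" unfolding S_def using Suc.prems i by (intro Suc.IH) auto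
    finally show ?thesis using eq by simp
  qed
qed

lemma bits_eq:
  fixes x y :: nat
  assumes "x < 2^n" "y < 2^n" "\<forall>i\<in>{1..n}. bitv x i = bitv y i"
  shows "x = y"
proof (rule bit_eqI)
  fix m
  show "bit x m \<longleftrightarrow> bit y m"
  proof (cases "m < n")
    case True
    then have "bitv x (Suc m) = bitv y (Suc m)" using assms(3) by auto
    then show ?thesis by (simp add: bitv_bit split: if_splits)
  next
    case False
    have "\<not> bit (take_bit n x) m" using False by (simp add: bit_take_bit_iff)
    then have "\<not> bit x m" using take_bit_nat_eq_self[OF assms(1)] by simp
    moreover have "\<not> bit (take_bit n y) m" using False by (simp add: bit_take_bit_iff)
    then have "\<not> bit y m" using take_bit_nat_eq_self[OF assms(2)] by simp
    ultimately show ?thesis by simp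
  qed
qed

lemma set_bits_lt:
  assumes "\<forall>i\<in>X. g i \<le> 1"
  shows "set_bits n a X g < 2^n"
  unfolding set_bits_def using assms bitv_le1 by (intro digits_lt) auto

lemma set_bits_bit:
  assumes "\<forall>i\<in>X. g i \<le> 1" "i \<in> {1..n}"
  shows "bitv (set_bits n a X g) i = (if i \<in> X then g i else bitv a i)"
  unfolding set_bits_def using assms bitv_le1
  by (subst digits_bit[where f="\<lambda>i. if i \<in> X then g i else bitv a i"]) auto

lemma set_bits_self:
  assumes "a < 2^n"
  shows "set_bits n a X (\<lambda>x. bitv a x) = a"
proof (rule bits_eq[OF set_bits_lt assms])
  show "\<forall>i\<in>X. bitv a i \<le> 1" using bitv_le1 by auto
  show "\<forall>i\<in>{1..n}. bitv (set_bits n a X (bitv a)) i = bitv a i"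
    using set_bits_bit[of X "bitv a"] bitv_le1 by auto
qed

lemma poly_lt_sum:
  fixes p :: "'a::comm_semiring_1 poly"
  assumes "degree p < r"
  shows "poly p z = (\<Sum>t<r. coeff p t * z ^ t)"
proof -
  have "poly p z = (\<Sum>t\<le>degree p. coeff p t * z ^ t)" by (rule poly_altdef)
  also have "\<dots> = (\<Sum>t<r. coeff p t * z ^ t)"
    by (rule sum.mono_neutral_left) (use assms in \<open>auto simp: coeff_eq_0\<close>)
  finally show ?thesis .
qed

lemma vandermonde_zero:
  fixes x :: "'b \<Rightarrow> 'a::field" and y :: "'b \<Rightarrow> 'a"
  assumes fin: "finite T" and inj: "inj_on x T"
    and eqs: "\<forall>t<r. (\<Sum>s\<in>T. x s ^ t * y s) = 0"
    and card: "card {s\<in>T. y s \<noteq> 0} \<le> r"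
  shows "\<forall>s\<in>T. y s = 0"
proof (rule ccontr)
  assume "\<not> (\<forall>s\<in>T. y s = 0)"
  then obtain s0 where s0: "s0 \<in> T" "y s0 \<noteq> 0" by blast
  define Z where "Z = {s\<in>T. y s \<noteq> 0}"
  have finZ: "finite Z" unfolding Z_def using fin by simp
  have s0Z: "s0 \<in> Z" unfolding Z_def using s0 by simp
  define p where "p = (\<Prod>s\<in>Z - {s0}. [:- x s, 1:])"
  have "degree p \<le> (\<Sum>s\<in>Z - {s0}. (degree \<circ> (\<lambda>s. [:- x s, 1:])) s)"
    unfolding p_def by (rule degree_prod_sum_le) (use finZ in simp)
  also have "\<dots> = card (Z - {s0})" by simp
  also have "\<dots> < r"
  proof -
    have "card Z > 0" using finZ s0Z card_gt_0_iff by blast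
    moreover have "card (Z - {s0}) = card Z - 1" using finZ s0Z by (simp add: card_Diff_singleton)
    moreover have "card Z \<le> r" using card unfolding Z_def .
    ultimately show ?thesis by linarith
  qed
  finally have deg: "degree p < r" .
  have pv: "poly p z = (\<Prod>s\<in>Z - {s0}. z - x s)" for z
    unfolding p_def by (simp add: poly_prod)
  have p0: "poly p (x s) = 0" if "s \<in> Z - {s0}" for s
    unfolding pv using that finZ by (intro prod_zero) auto
  have p1: "poly p (x s0) \<noteq> 0"
    unfolding pv
  proof -
    have "\<forall>s\<in>Z-{s0}. x s0 - x s \<noteq> 0" using inj s0Z unfolding Z_def inj_on_def by auto
    then show "(\<Prod>s\<in>Z - {s0}. x s0 - x s) \<noteq> 0" using finZ by (subst prod_zero_iff) auto
  qed
  have "(\<Sum>s\<in>T. poly p (x s) * y s) = (\<Sum>s\<in>T. \<Sum>t<r. coeff p t * (x s ^ t * y s))"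
    by (simp add: poly_lt_sum[OF deg] sum_distrib_right mult.assoc)
  also have "\<dots> = (\<Sum>t<r. coeff p t * (\<Sum>s\<in>T. x s ^ t * y s))"
    by (subst sum.swap) (simp add: sum_distrib_left)
  also have "\<dots> = 0" using eqs by simp
  finally have S0: "(\<Sum>s\<in>T. poly p (x s) * y s) = 0" .
  have "(\<Sum>s\<in>T. poly p (x s) * y s) = poly p (x s0) * y s0 + (\<Sum>s\<in>T - {s0}. poly p (x s) * y s)"
    using fin s0 by (simp add: sum.remove)
  also have "(\<Sum>s\<in>T - {s0}. poly p (x s) * y s) = 0"
  proof (rule sum.neutral, intro ballI)
    fix s assume s: "s \<in> T - {s0}"
    show "poly p (x s) * y s = 0"
    proof (cases "y s = 0")
      case False
      then have "s \<in> Z - {s0}" using s unfolding Z_def by auto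
      then show ?thesis using p0 by simp
    qed simp
  qed
  finally have "poly p (x s0) * y s0 = 0" using S0 by simp
  then show False using p1 s0 by simp
qed

locale hsetup =
  fixes n N w :: nat and P :: "nat \<Rightarrow> nat set" and m col :: "nat \<Rightarrow> nat"
  assumes Nw: "2 ^ w = N + 1"
    and col_bij: "bij_betw col {1..N} {1..2 ^ w - 1}"
    and P_sub: "\<forall>i\<in>{1..N}. P i \<subseteq> {1..n}"
    and P_disj: "\<forall>i\<in>{1..N}. \<forall>i'\<in>{1..N}. i \<noteq> i' \<longrightarrow> P i \<inter> P i' = {}"
    and m_in: "\<forall>i\<in>{1..N}. m i \<in> P i"
begin

definition flip :: "nat \<Rightarrow> nat \<Rightarrow> nat" where
  "flip i b = set_bits n b (P i) (\<lambda>x. (bitv b x + 1) mod 2)"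

definition par :: "nat \<Rightarrow> nat \<Rightarrow> nat" where
  "par s b = (\<Sum>i\<in>{1..N}. bitv b (m i) * ((col i div 2 ^ s) mod 2)) mod 2"

definition syn :: "nat \<Rightarrow> nat" where
  "syn b = (\<Sum>i\<in>{1..w}. par (i - 1) b * 2 ^ (i - 1))"

lemma flip_lt: "flip i b < 2 ^ n"
  unfolding flip_def by (rule set_bits_lt) auto

lemma flip_bit: "j \<in> {1..n} \<Longrightarrow> bitv (flip i b) j = (if j \<in> P i then 1 - bitv b j else bitv b j)"
  unfolding flip_def using bitv_01[of b j]
  by (subst set_bits_bit) auto

lemma flip_flip: "b < 2 ^ n \<Longrightarrow> flip i (flip i b) = b"
proof (rule bits_eq[OF flip_lt], assumption, intro ballI)
  fix j assume j: "j \<in> {1..n}"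
  show "bitv (flip i (flip i b)) j = bitv b j"
    using bitv_01[of b j] by (cases "j \<in> P i") (auto simp: flip_bit[OF j])
qed

lemma m_range: "i \<in> {1..N} \<Longrightarrow> m i \<in> {1..n}"
  using P_sub m_in by blast

lemma m_P: "i \<in> {1..N} \<Longrightarrow> i' \<in> {1..N} \<Longrightarrow> m i' \<in> P i \<longleftrightarrow> i' = i"
  using P_disj m_in by blast

lemma m_flip: "i \<in> {1..N} \<Longrightarrow> i' \<in> {1..N} \<Longrightarrow>
   bitv (flip i b) (m i') = (if i' = i then 1 - bitv b (m i) else bitv b (m i'))"
  using m_range[of i'] m_P[of i i'] by (simp add: flip_bit)

lemma par_01: "par s b \<le> 1"
  unfolding par_def by simp

lemma par_01': "par s b \<le> Suc 0"
  using par_01 by simp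

lemma par_flip:
  assumes i: "i \<in> {1..N}"
  shows "par s (flip i b) = (par s b + (col i div 2 ^ s) mod 2) mod 2"
proof -
  define c where "c = (\<lambda>i. (col i div 2 ^ s) mod 2)"
  define A where "A = (\<Sum>i'\<in>{1..N} - {i}. bitv b (m i') * c i')"
  have fin: "finite {1..N}" by simp
  have p1: "par s b = (\<Sum>i'\<in>{1..N}. bitv b (m i') * c i') mod 2"
    unfolding par_def c_def ..
  have p2: "par s (flip i b) = (\<Sum>i'\<in>{1..N}. bitv (flip i b) (m i') * c i') mod 2"
    unfolding par_def c_def ..
  have s1: "(\<Sum>i'\<in>{1..N}. bitv b (m i') * c i') = A + bitv b (m i) * c i"
    unfolding A_def using i by (subst sum.remove[OF fin i]) simp
  have "(\<Sum>i'\<in>{1..N}. bitv (flip i b) (m i') * c i') = (\<Sum>i'\<in>{1..N} - {i}. bitv (flip i b) (m i') * c i') + bitv (flip i b) (m i) * c i"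
    using i by (subst sum.remove[OF fin i]) simp
  also have "(\<Sum>i'\<in>{1..N} - {i}. bitv (flip i b) (m i') * c i') = A"
    unfolding A_def by (rule sum.cong) (use i in \<open>auto simp: m_flip\<close>)
  finally have s2: "(\<Sum>i'\<in>{1..N}. bitv (flip i b) (m i') * c i') = A + (1 - bitv b (m i)) * c i"
    using i by (simp add: m_flip)
  have c01: "c i = 0 \<or> c i = 1" unfolding c_def by auto
  have x01: "bitv b (m i) = 0 \<or> bitv b (m i) = 1" using bitv_01[of b "m i"] by auto
  have "(A + (1 - bitv b (m i)) * c i) mod 2 = ((A + bitv b (m i) * c i) mod 2 + c i) mod 2"
    using c01 x01 by (elim disjE) (simp_all, presburger+)
  then have "par s (flip i b) = (par s b + c i) mod 2" unfolding p1 p2 s1 s2 .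
  then show ?thesis by (simp add: c_def)
qed

lemma syn_lt: "syn b < 2 ^ w"
  unfolding syn_def by (rule digits_lt) (simp add: par_01')

lemma syn_bit: "s < w \<Longrightarrow> bitv (syn b) (Suc s) = par s b"
  unfolding syn_def by (subst digits_bit) (auto simp: par_01')

lemma syn_eq_iff: "u < 2 ^ w \<Longrightarrow> syn b = u \<longleftrightarrow> (\<forall>s<w. par s b = bitv u (Suc s))"
proof
  assume "syn b = u" then show "\<forall>s<w. par s b = bitv u (Suc s)" using syn_bit by auto
next
  assume a: "u < 2 ^ w" "\<forall>s<w. par s b = bitv u (Suc s)"
  show "syn b = u"
  proof (rule bits_eq[OF syn_lt a(1)], intro ballI)
    fix i assume "i \<in> {1..w}"
    then obtain s where "i = Suc s" "s < w" by (cases i) auto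
    then show "bitv (syn b) i = bitv u i" using a syn_bit by auto
  qed
qed

lemma syn0_iff: "syn b = 0 \<longleftrightarrow> (\<forall>s<w. par s b = 0)"
  by (subst syn_eq_iff) (auto simp: bitv_def)

lemma ham_iff: "(\<lambda>i. bitv b (m i)) \<in> hamming_code w col \<longleftrightarrow> syn b = 0"
proof -
  have e: "{1..2 ^ w - 1} = {1..N}" using Nw by simp
  show ?thesis unfolding hamming_code_def syn0_iff par_def e
    using bitv_01 by (auto simp: even_iff_mod_2_eq_zero)
qed

lemma col_i: "i \<in> {1..N} \<Longrightarrow> col i < 2 ^ w \<and> col i \<noteq> 0"
proof -
  assume "i \<in> {1..N}"
  then have "col i \<in> {1..2^w-1}" using col_bij unfolding bij_betw_def by blast
  then show ?thesis using Nw by auto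
qed

lemma syn_flip0:
  assumes i: "i \<in> {1..N}"
  shows "syn (flip i b) = 0 \<longleftrightarrow> syn b = col i"
proof -
  have "syn (flip i b) = 0 \<longleftrightarrow> (\<forall>s<w. (par s b + (col i div 2 ^ s) mod 2) mod 2 = 0)"
    unfolding syn0_iff par_flip[OF i] ..
  also have "\<dots> \<longleftrightarrow> (\<forall>s<w. par s b = bitv (col i) (Suc s))"
  proof -
    have eqv: "(p + q) mod 2 = 0 \<longleftrightarrow> p = q" if "p \<le> 1" "q \<le> 1" for p q :: nat
      using that by (auto simp: le_Suc_eq)
    have bc: "(col i div 2 ^ s) mod 2 = bitv (col i) (Suc s)" for s
      unfolding bitv_def by simp
    show ?thesis unfolding bc using eqv par_01 bitv_le1 by simp
  qed
  also have "\<dots> \<longleftrightarrow> syn b = col i"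
    using syn_eq_iff col_i[OF i] by auto
  finally show ?thesis .
qed

lemma syn_cover: "syn b = 0 \<or> (\<exists>i\<in>{1..N}. syn b = col i)"
proof (cases "syn b = 0")
  case False
  then have "syn b \<in> {1..2 ^ w - 1}" using syn_lt[of b] by auto
  then show ?thesis using col_bij unfolding bij_betw_def by auto
qed simp

lemma count_syn0: "card {b. b < 2 ^ n \<and> syn b = 0} * 2 ^ w = 2 ^ n"
proof -
  define F where "F u = {b \<in> {..<(2::nat) ^ n}. syn b = u}" for u
  have F0: "card (F u) = card (F 0)" if u: "u < 2 ^ w" for u
  proof (cases "u = 0")
    case False
    obtain i where i: "i \<in> {1..N}" "u = col i"
    proof -
      have "u \<in> {1..2^w-1}" using u False by auto
      then have "u \<in> col ` {1..N}" using col_bij unfolding bij_betw_def by simp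
      then show ?thesis using that by blast
    qed
    have "bij_betw (flip i) (F 0) (F u)"
    proof (rule bij_betw_byWitness[where f'="flip i"])
      show "\<forall>a\<in>F 0. flip i (flip i a) = a" unfolding F_def using flip_flip by simp
      show "\<forall>a'\<in>F u. flip i (flip i a') = a'" unfolding F_def using flip_flip by simp
      show "flip i ` F 0 \<subseteq> F u"
      proof
        fix y assume "y \<in> flip i ` F 0"
        then obtain x where x: "x \<in> F 0" "y = flip i x" by blast
        then have "x < 2^n" "syn x = 0" unfolding F_def by auto
        then have "syn (flip i (flip i x)) = 0" using flip_flip by simp
        then have "syn (flip i x) = col i" using syn_flip0[OF i(1)] by blast
        then show "y \<in> F u" unfolding F_def using x(2) i(2) flip_lt by simp
      qed
      show "flip i ` F u \<subseteq> F 0"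
      proof
        fix y assume "y \<in> flip i ` F u"
        then obtain x where x: "x \<in> F u" "y = flip i x" by blast
        then have "syn x = col i" unfolding F_def using i(2) by auto
        then have "syn (flip i x) = 0" using syn_flip0[OF i(1)] by blast
        then show "y \<in> F 0" unfolding F_def using x(2) flip_lt by simp
      qed
    qed
    then show ?thesis by (simp add: bij_betw_same_card)
  qed simp
  have "card {..<(2::nat)^n} = (\<Sum>b\<in>{..<(2::nat)^n}. (1::nat))" by simp
  also have "\<dots> = (\<Sum>u\<in>{..<(2::nat)^w}. \<Sum>b\<in>{b \<in> {..<(2::nat)^n}. syn b = u}. 1)"
    by (rule sum.group[symmetric]) (auto simp: syn_lt)
  also have "\<dots> = (\<Sum>u\<in>{..<(2::nat)^w}. card (F u))" by (simp add: F_def)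
  also have "\<dots> = (\<Sum>u\<in>{..<(2::nat)^w}. card (F 0))" by (intro sum.cong refl F0) simp
  finally have "card (F 0) * 2 ^ w = 2 ^ n" by simp
  moreover have "F 0 = {b. b < 2 ^ n \<and> syn b = 0}" unfolding F_def by auto
  ultimately show ?thesis by simp
qed


lemma step1:
  fixes lam :: "nat \<Rightarrow> nat \<Rightarrow> 'a::field" and e :: "nat \<Rightarrow> nat \<Rightarrow> 'a"
  assumes inj: "inj_on (\<lambda>(j, v). lam j v) ({1..n} \<times> {0, 1})"
    and kd: "k < d"
    and H: "H \<subseteq> {1..n}" and R: "R \<subseteq> {1..n} - H" "card R = d"
    and Pcard: "\<forall>i\<in>{1..N}. card (P i) \<le> d - k"
    and PH: "(\<Union>i\<in>{1..N}. P i) = H"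
    and e: "e \<in> hadamard_msr_code n k lam"
    and dl: "\<forall>j\<in>R. \<forall>a<2^n. syn a = 0 \<longrightarrow> (\<forall>i\<in>{1..N}. e j a + e j (flip i a) = 0)"
    and a: "a < 2^n" "syn a = 0" and i: "i \<in> {1..N}"
  shows "(\<forall>j\<in>P i. e j a = 0 \<and> e j (flip i a) = 0) \<and> (\<forall>j\<in>H - P i. e j a + e j (flip i a) = 0)"
proof -
  define a' where "a' = flip i a"
  have a': "a' < 2^n" unfolding a'_def by (rule flip_lt)
  define T where "T = {1..n} \<times> {0::nat, 1}"
  define x where "x = (\<lambda>(j, v). lam j v)"
  define y where "y = (\<lambda>(j, v). (if v = bitv a j then e j a else 0) + (if v = bitv a' j then e j a' else 0))"
  have PiH: "P i \<subseteq> H" using PH i by blast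
  have Pin: "P i \<subseteq> {1..n}" using PiH H by blast
  have finT: "finite T" unfolding T_def by simp
  have injT: "inj_on x T" using inj unfolding T_def x_def .
  have code: "\<forall>b < 2 ^ n. \<forall>t \<in> {1..n - k}. (\<Sum>j\<in>{1..n}. lam j (bitv b j) ^ (t - 1) * e j b) = 0"
    using e unfolding hadamard_msr_code_def by blast
  have eqs: "\<forall>t<n - k. (\<Sum>s\<in>T. x s ^ t * y s) = 0"
  proof (intro allI impI)
    fix t assume t: "t < n - k"
    have inner: "(\<Sum>v\<in>{0::nat,1}. lam j v ^ t * y (j, v)) = lam j (bitv a j) ^ t * e j a + lam j (bitv a' j) ^ t * e j a'" for j
    proof -
      have s2: "(\<Sum>v\<in>{0::nat,1}. lam j v ^ t * y (j, v)) = lam j 0 ^ t * y (j,0) + lam j 1 ^ t * y (j,1)" by simp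
      have "bitv a j = 0 \<or> bitv a j = 1" "bitv a' j = 0 \<or> bitv a' j = 1" using bitv_01 by auto
      then show ?thesis unfolding s2 by (elim disjE) (simp_all add: y_def algebra_simps)
    qed
    have "(\<Sum>s\<in>T. x s ^ t * y s) = (\<Sum>j\<in>{1..n}. \<Sum>v\<in>{0::nat,1}. lam j v ^ t * y (j, v))"
      unfolding T_def x_def by (subst sum.cartesian_product) (simp add: case_prod_beta)
    also have "\<dots> = (\<Sum>j\<in>{1..n}. lam j (bitv a j) ^ t * e j a) + (\<Sum>j\<in>{1..n}. lam j (bitv a' j) ^ t * e j a')"
      unfolding inner by (simp add: sum.distrib)
    also have "\<dots> = 0"
    proof -
      have t1: "Suc t \<in> {1..n-k}" using t by auto
      have "(\<Sum>j\<in>{1..n}. lam j (bitv a j) ^ (Suc t - 1) * e j a) = 0" using code a(1) t1 by blast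
      moreover have "(\<Sum>j\<in>{1..n}. lam j (bitv a' j) ^ (Suc t - 1) * e j a') = 0" using code a' t1 by blast
      ultimately show ?thesis by simp
    qed
    finally show "(\<Sum>s\<in>T. x s ^ t * y s) = 0" .
  qed
  have Rn: "R \<subseteq> {1..n}" using R by blast
  have PR: "P i \<inter> R = {}" using R PiH by blast
  have sub: "{s\<in>T. y s \<noteq> 0} \<subseteq> P i \<times> {0,1} \<union> (\<lambda>j. (j, bitv a j)) ` ({1..n} - P i - R)"
  proof
    fix s assume s: "s \<in> {s\<in>T. y s \<noteq> 0}"
    obtain j v where jv: "s = (j, v)" by (cases s)
    have j: "j \<in> {1..n}" and v: "v \<in> {0,1}" using s jv unfolding T_def by auto
    show "s \<in> P i \<times> {0,1} \<union> (\<lambda>j. (j, bitv a j)) ` ({1..n} - P i - R)"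
    proof (cases "j \<in> P i")
      case True then show ?thesis using jv v by auto
    next
      case False
      have ba: "bitv a' j = bitv a j" unfolding a'_def using flip_bit[OF j] False by simp
      have yv: "y (j, v) \<noteq> 0" using s jv by simp
      have yv': "y (j, v) = (if v = bitv a j then e j a + e j a' else 0)" by (simp add: y_def ba)
      then have vv: "v = bitv a j" using yv by (auto split: if_splits)
      have "j \<notin> R"
      proof
        assume "j \<in> R"
        then have "e j a + e j a' = 0" using dl a i unfolding a'_def by blast
        then show False using yv vv yv' by simp
      qed
      then show ?thesis using jv vv j False by auto
    qed
  qed
  have cardS: "card {s\<in>T. y s \<noteq> 0} \<le> n - k"
  proof -
    have fP: "finite (P i)" using Pin finite_subset by blast
    have "card {s\<in>T. y s \<noteq> 0} \<le> card (P i \<times> {0::nat,1} \<union> (\<lambda>j. (j, bitv a j)) ` ({1..n} - P i - R))"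
      by (rule card_mono) (use fP sub in auto)
    also have "\<dots> \<le> card (P i \<times> {0::nat,1}) + card ((\<lambda>j. (j, bitv a j)) ` ({1..n} - P i - R))"
      by (rule card_Un_le)
    also have "\<dots> \<le> 2 * card (P i) + card ({1..n} - P i - R)"
      using card_image_le[of "{1..n} - P i - R" "\<lambda>j. (j, bitv a j)"] fP by (simp add: card_cartesian_product)
    also have "card ({1..n} - P i - R) = n - (card (P i) + d)"
    proof -
      have "{1..n} - P i - R = {1..n} - (P i \<union> R)" by blast
      moreover have "card (P i \<union> R) = card (P i) + d"
        using card_Un_disjoint[OF fP finite_subset[OF Rn] PR] R(2) by simp
      ultimately show ?thesis using Pin Rn by (simp add: card_Diff_subset finite_subset)
    qed
    finally have c1: "card {s\<in>T. y s \<noteq> 0} \<le> 2 * card (P i) + (n - (card (P i) + d))" .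
    have "card (P i \<union> R) \<le> n" using Pin Rn card_mono[of "{1..n}" "P i \<union> R"] by simp
    then have "card (P i) + d \<le> n"
        using card_Un_disjoint[OF fP finite_subset[OF Rn] PR] R(2) by simp
    moreover have "card (P i) \<le> d - k" using Pcard i by blast
    ultimately show ?thesis using c1 kd by linarith
  qed
  have y0: "\<forall>s\<in>T. y s = 0" by (rule vandermonde_zero[OF finT injT eqs cardS])
  show ?thesis
  proof (intro conjI ballI)
    fix j assume j: "j \<in> P i"
    then have jn: "j \<in> {1..n}" using Pin by blast
    have ba: "bitv a' j = 1 - bitv a j" unfolding a'_def using flip_bit[OF jn] j by simp
    have "(j, bitv a j) \<in> T" "(j, bitv a' j) \<in> T" unfolding T_def using jn bitv_01[of a j] bitv_01[of a' j] by auto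
    then have "y (j, bitv a j) = 0" "y (j, bitv a' j) = 0" using y0 by auto
    moreover have "y (j, bitv a j) = e j a \<and> y (j, bitv a' j) = e j a'"
    proof -
      have "bitv a j = 0 \<or> bitv a j = 1" using bitv_01[of a j] by auto
      then show ?thesis unfolding ba by (elim disjE) (simp_all add: y_def ba)
    qed
    ultimately show "e j a = 0" "e j (flip i a) = 0" unfolding a'_def by auto
  next
    fix j assume j: "j \<in> H - P i"
    then have jn: "j \<in> {1..n}" using H by blast
    have ba: "bitv a' j = bitv a j" unfolding a'_def using flip_bit[OF jn] j by simp
    have "(j, bitv a j) \<in> T" unfolding T_def using jn bitv_01[of a j] by auto
    then have "y (j, bitv a j) = 0" using y0 by auto
    moreover have "y (j, bitv a j) = e j a + e j a'" by (simp add: y_def ba)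
    ultimately show "e j a + e j (flip i a) = 0" unfolding a'_def by simp
  qed
qed

lemma repair_zero:
  fixes lam :: "nat \<Rightarrow> nat \<Rightarrow> 'a::field" and e :: "nat \<Rightarrow> nat \<Rightarrow> 'a"
  assumes inj: "inj_on (\<lambda>(j, v). lam j v) ({1..n} \<times> {0, 1})"
    and kd: "k < d"
    and H: "H \<subseteq> {1..n}" and R: "R \<subseteq> {1..n} - H" "card R = d"
    and Pcard: "\<forall>i\<in>{1..N}. card (P i) \<le> d - k"
    and PH: "(\<Union>i\<in>{1..N}. P i) = H"
    and e: "e \<in> hadamard_msr_code n k lam"
    and dl: "\<forall>j\<in>R. \<forall>a<2^n. syn a = 0 \<longrightarrow> (\<forall>i\<in>{1..N}. e j a + e j (flip i a) = 0)"
  shows "\<forall>j\<in>H. e j = (\<lambda>_. 0)"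
proof (intro ballI ext)
  fix j b assume j: "j \<in> H"
  note S1 = step1[OF inj kd H R Pcard PH e dl]
  show "e j b = 0"
  proof (cases "b < 2^n")
    case False
    then show ?thesis using e unfolding hadamard_msr_code_def by auto
  next
    case b: True
    obtain i0 where i0: "i0 \<in> {1..N}" "j \<in> P i0" using PH j by blast
    from syn_cover[of b] show ?thesis
    proof
      assume "syn b = 0"
      then show ?thesis using S1[OF b _ i0(1)] i0(2) by blast
    next
      assume "\<exists>i\<in>{1..N}. syn b = col i"
      then obtain i1 where i1: "i1 \<in> {1..N}" "syn b = col i1" by blast
      define a where "a = flip i1 b"
      have a: "a < 2^n" "syn a = 0" "flip i1 a = b"
        unfolding a_def using flip_lt syn_flip0[OF i1(1)] flip_flip[OF b] i1(2) by auto
      show ?thesis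
      proof (cases "i1 = i0")
        case True
        then show ?thesis using S1[OF a(1,2) i1(1)] i0(2) a(3) by blast
      next
        case False
        then have "j \<in> H - P i1" using j i0 i1 P_disj by blast
        then have "e j a + e j b = 0" using S1[OF a(1,2) i1(1)] a(3) by auto
        moreover have "e j a = 0" using S1[OF a(1,2) i0(1)] i0(2) by blast
        ultimately show ?thesis by simp
      qed
    qed
  qed
qed

lemma count_real: "real (card ({a. a < 2^n \<and> syn a = 0} \<times> {1..N})) * 2^w = real N * 2^n"
proof -
  have "card ({a. a < 2^n \<and> syn a = 0} \<times> {1..N}) = card {a. a < 2^n \<and> syn a = 0} * N"
    by (simp add: card_cartesian_product)
  moreover have "card {a. a < 2^n \<and> syn a = 0} * 2^w = 2^n" by (rule count_syn0)
  ultimately have "card ({a. a < 2^n \<and> syn a = 0} \<times> {1..N}) * 2^w = N * (card {a. a < 2^n \<and> syn a = 0} * 2^w)"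
    by (simp only: ac_simps)
  then have "card ({a. a < 2^n \<and> syn a = 0} \<times> {1..N}) * 2^w = N * 2^n"
    using count_syn0 by simp
  then have "real (card ({a. a < 2^n \<and> syn a = 0} \<times> {1..N}) * 2^w) = real (N * 2^n)" by (rule arg_cong)
  then show ?thesis by (simp only: of_nat_mult of_nat_power of_nat_numeral)
qed

lemma sum01:
  assumes "a < 2^n"
  shows "(\<Sum>v\<in>{0, 1::nat}. f (set_bits n a (P i) (\<lambda>x. (bitv a x + v) mod 2))) = f a + f (flip i a)"
proof -
  have "(\<lambda>x. (bitv a x + 0) mod 2) = bitv a" by (rule ext) (simp add: bitv_def)
  then have "set_bits n a (P i) (\<lambda>x. (bitv a x + 0) mod 2) = a" using set_bits_self[OF assms] by simp
  then show ?thesis by (simp add: flip_def)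
qed

end

lemma code_diff:
  assumes "c \<in> hadamard_msr_code n k lam" "c' \<in> hadamard_msr_code n k lam"
  shows "(\<lambda>j a. c j a - c' j a) \<in> hadamard_msr_code n k lam"
  using assms unfolding hadamard_msr_code_def
  by (auto simp: right_diff_distrib sum_subtractf)

lemma real_arith:
  fixes X :: real and N w h d k :: nat
  assumes "X * 2^w = real N * 2^n" "2^w = N + 1" "h = N * (d - k)" "k < d"
  shows "X = real h * 2^n / (real d - real k + real h)"
proof -
  define D where "D = real (d - k)"
  have dk: "real d - real k = D" unfolding D_def using assms(4) by simp
  have pos: "D > 0" unfolding D_def using assms(4) by simp
  have "real ((2::nat)^w) = real (N + 1)" using assms(2) by (rule arg_cong)
  then have w: "(2::real)^w = real N + 1" by simp
  have hr: "real h = real N * D" unfolding assms(3) D_def by (simp only: of_nat_mult)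
  have "real h * 2^n / (real d - real k + real h) = (real N * 2^n * D) / ((real N + 1) * D)"
    unfolding hr dk by (simp add: algebra_simps)
  also have "\<dots> = real N * 2^n / (real N + 1)"
    using pos by simp
  also have "\<dots> = X" using assms(1) w by (simp add: field_simps)
  finally show ?thesis by simp
qed

lemma partition_exists:
  fixes H :: "nat set"
  assumes fin: "finite H" and cH: "card H = N * \<delta>" and dpos: "\<delta> > 0"
  shows "\<exists>P m. (\<forall>i\<in>{1..N}. card (P i) \<le> \<delta>)
     \<and> (\<forall>i\<in>{1..N}. \<forall>i'\<in>{1..N}. i \<noteq> i' \<longrightarrow> P i \<inter> P i' = {})
     \<and> (\<Union>i\<in>{1..N}. P i) = H \<and> (\<forall>i\<in>{1..N}. m i \<in> P i)"
proof -
  obtain f where f: "bij_betw f {0..<card H} H" using ex_bij_betw_nat_finite[OF fin] by blast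
  define I where "I i = {(i - 1) * \<delta>..<i * \<delta>}" for i
  define P where "P i = f ` I i" for i
  define m where "m i = f ((i - 1) * \<delta>)" for i
  have Isub: "I i \<subseteq> {0..<card H}" if "i \<in> {1..N}" for i
  proof -
    have "i * \<delta> \<le> N * \<delta>" using that by simp
    then show ?thesis unfolding I_def cH by auto
  qed
  have cardI: "card (I i) = \<delta>" if "i \<ge> 1" for i
  proof -
    have "i * \<delta> = (i - 1) * \<delta> + \<delta>" using that by (cases i) auto
    then show ?thesis unfolding I_def by simp
  qed
  have Idiv: "u div \<delta> = i - 1" if "u \<in> I i" "i \<ge> 1" for u i
  proof -
    have "i * \<delta> = \<delta> * Suc (i - 1)" using that(2) by (cases i) auto
    then show ?thesis using that unfolding I_def by (intro div_nat_eqI) (auto simp: mult.commute)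
  qed
  have injf: "inj_on f {0..<card H}" and imf: "f ` {0..<card H} = H" using f unfolding bij_betw_def by auto
  show ?thesis
  proof (intro exI conjI ballI impI)
    fix i assume i: "i \<in> {1..N}"
    have fI: "finite (I i)" unfolding I_def by simp
    show "card (P i) \<le> \<delta>" unfolding P_def using card_image_le[OF fI, of f] cardI[of i] i by simp
    show "m i \<in> P i" unfolding P_def m_def I_def using dpos i
      by (intro imageI) (cases i, auto)
  next
    fix i i' assume i: "i \<in> {1..N}" and i': "i' \<in> {1..N}" and ne: "i \<noteq> i'"
    show "P i \<inter> P i' = {}"
    proof (rule ccontr)
      assume "P i \<inter> P i' \<noteq> {}"
      then obtain u u' where u: "u \<in> I i" "u' \<in> I i'" "f u = f u'" unfolding P_def by blast
      then have "u = u'" using injf Isub[OF i] Isub[OF i'] unfolding inj_on_def by blast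
      moreover have "u div \<delta> = i - 1" using Idiv[of u i] u(1) i by auto
      moreover have "u' div \<delta> = i' - 1" using Idiv[of u' i'] u(2) i' by auto
      ultimately have "i - 1 = i' - 1" by simp
      then show False using ne i i' by auto
    qed
  next
    show "(\<Union>i\<in>{1..N}. P i) = H"
    proof
      show "(\<Union>i\<in>{1..N}. P i) \<subseteq> H" unfolding P_def using Isub imf by blast
      show "H \<subseteq> (\<Union>i\<in>{1..N}. P i)"
      proof
        fix x assume "x \<in> H"
        then have "x \<in> f ` {0..<card H}" using imf by simp
        then obtain u0 where u0: "u0 \<in> {0..<card H}" "x = f u0" by blast
        then obtain u where u: "u < card H" "x = f u" by auto
        define i where "i = u div \<delta> + 1"
        have "u div \<delta> < N" using u(1) cH by (simp add: less_mult_imp_div_less)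
        then have i1: "i \<in> {1..N}" unfolding i_def by auto
        have d1: "u div \<delta> * \<delta> \<le> u" by (rule div_times_less_eq_dividend)
        have d2: "u div \<delta> * \<delta> + u mod \<delta> = u" by (rule div_mult_mod_eq)
        have d3: "u mod \<delta> < \<delta>" using dpos by (rule mod_less_divisor)
        have d4: "u < u div \<delta> * \<delta> + \<delta>" using d2 d3 by linarith
        have "u \<in> I i" unfolding I_def i_def using d1 d4 by (simp add: algebra_simps)

        then show "x \<in> (\<Union>i\<in>{1..N}. P i)" unfolding P_def using i1 u(2) by blast
      qed
    qed
  qed
qed

theorem theorem4:
  fixes n k h d w :: nat
    and lam :: "nat \<Rightarrow> nat \<Rightarrow> 'a::{field,finite}"
    and H R :: "nat set"
    and P :: "nat \<Rightarrow> nat set"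
    and m col :: "nat \<Rightarrow> nat"
  assumes "n > k" and "k \<ge> 1"
    and "2 \<le> h" and "h \<le> n - k"
    and "k < d" and "d \<le> n - h"
    and "(d - k) dvd h"
    and "(h div (d - k) + 1) dvd 2 ^ n"
    and "2 ^ w = h div (d - k) + 1"
    and "card (UNIV :: 'a set) > 2 * n"
    and "inj_on (\<lambda>(j, v). lam j v) ({1..n} \<times> {0, 1})"
    and "H \<subseteq> {1..n}" and "card H = h"
    and "R \<subseteq> {1..n} - H" and "card R = d"
    and "\<forall>i\<in>{1..h div (d - k)}. card (P i) = d - k"
    and "\<forall>i\<in>{1..h div (d - k)}. \<forall>i'\<in>{1..h div (d - k)}. i \<noteq> i' \<longrightarrow> P i \<inter> P i' = {}"
    and "(\<Union>i\<in>{1..h div (d - k)}. P i) = H"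
    and "\<forall>i\<in>{1..h div (d - k)}. m i \<in> P i"
    and "bij_betw col {1..h div (d - k)} {1..2 ^ w - 1}"
  shows
    "(\<forall>c\<in>hadamard_msr_code n k lam. \<forall>c'\<in>hadamard_msr_code n k lam.
        (\<forall>j\<in>R. \<forall>a < 2 ^ n. (\<lambda>i. bitv a (m i)) \<in> hamming_code w col \<longrightarrow>
           (\<forall>i\<in>{1..h div (d - k)}.
              (\<Sum>v\<in>{0, 1::nat}. c j (set_bits n a (P i) (\<lambda>x. (bitv a x + v) mod 2))) =
              (\<Sum>v\<in>{0, 1::nat}. c' j (set_bits n a (P i) (\<lambda>x. (bitv a x + v) mod 2)))))
        \<longrightarrow> (\<forall>j\<in>H. c j = c' j))
     \<and> real (card {(a, i). a < 2 ^ n \<and> (\<lambda>i'. bitv a (m i')) \<in> hamming_code w col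
                          \<and> i \<in> {1..h div (d - k)}})
         = real h * 2 ^ n / (real d - real k + real h)
     \<and> real d * real (card {(a, i). a < 2 ^ n \<and> (\<lambda>i'. bitv a (m i')) \<in> hamming_code w col
                          \<and> i \<in> {1..h div (d - k)}})
         = real d * real h * 2 ^ n / (real d - real k + real h)
     \<and> hd_optimal_repair n k (2 ^ n) h d (hadamard_msr_code n k lam)"
proof -
  define N where "N = h div (d - k)"
  have kd: "k < d" using assms(5) .
  have dpos: "d - k > 0" using kd by simp
  have hN: "h = N * (d - k)" unfolding N_def using assms(7) by simp
  note A = assms[folded N_def]
  have Hn: "H \<subseteq> {1..n}" by (rule A(12))
  have Psub: "\<forall>i\<in>{1..N}. P i \<subseteq> {1..n}" using A(18) Hn by blast
  have HS: "hsetup n N w P m col"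
    unfolding hsetup_def using A(9) A(20) Psub A(17) A(19) by auto
  have Pcard: "\<forall>i\<in>{1..N}. card (P i) \<le> d - k" using A(16) by simp
  have part1: "\<forall>c\<in>hadamard_msr_code n k lam. \<forall>c'\<in>hadamard_msr_code n k lam.
        (\<forall>j\<in>R. \<forall>a < 2 ^ n. (\<lambda>i. bitv a (m i)) \<in> hamming_code w col \<longrightarrow>
           (\<forall>i\<in>{1..N}.
              (\<Sum>v\<in>{0, 1::nat}. c j (set_bits n a (P i) (\<lambda>x. (bitv a x + v) mod 2))) =
              (\<Sum>v\<in>{0, 1::nat}. c' j (set_bits n a (P i) (\<lambda>x. (bitv a x + v) mod 2)))))
        \<longrightarrow> (\<forall>j\<in>H. c j = c' j)"
  proof (intro ballI impI)
    fix c c' j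
    assume c: "c \<in> hadamard_msr_code n k lam" and c': "c' \<in> hadamard_msr_code n k lam"
      and hyp: "\<forall>j\<in>R. \<forall>a < 2 ^ n. (\<lambda>i. bitv a (m i)) \<in> hamming_code w col \<longrightarrow>
           (\<forall>i\<in>{1..N}.
              (\<Sum>v\<in>{0, 1::nat}. c j (set_bits n a (P i) (\<lambda>x. (bitv a x + v) mod 2))) =
              (\<Sum>v\<in>{0, 1::nat}. c' j (set_bits n a (P i) (\<lambda>x. (bitv a x + v) mod 2))))"
      and j: "j \<in> H"
    define e where "e = (\<lambda>j a. c j a - c' j a)"
    have e: "e \<in> hadamard_msr_code n k lam" unfolding e_def by (rule code_diff[OF c c'])
    have dl: "\<forall>j\<in>R. \<forall>a<2^n. (hsetup.syn N w m col) a = 0 \<longrightarrow> (\<forall>i\<in>{1..N}. e j a + e j ((hsetup.flip n P) i a) = 0)"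
    proof (intro ballI allI impI)
      fix j a i assume j: "j \<in> R" and a: "a < 2^n" and sa: "(hsetup.syn N w m col) a = 0" and i: "i \<in> {1..N}"
      have "(\<lambda>i. bitv a (m i)) \<in> hamming_code w col" using sa hsetup.ham_iff[OF HS] by simp
      then have "c j a + c j ((hsetup.flip n P) i a) = c' j a + c' j ((hsetup.flip n P) i a)"
        using hyp j a i hsetup.sum01[OF HS a, of "c j" i] hsetup.sum01[OF HS a, of "c' j" i] by simp
      then show "e j a + e j ((hsetup.flip n P) i a) = 0" unfolding e_def by (simp add: algebra_simps)
    qed
    have "\<forall>j\<in>H. e j = (\<lambda>_. 0)"
      by (rule hsetup.repair_zero[OF HS A(11) kd Hn A(14) A(15) Pcard A(18) e dl])
    then have "e j = (\<lambda>_. 0)" using j by blast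
    then show "c j = c' j"
    proof -
      assume ej: "e j = (\<lambda>_. 0)"
      show ?thesis
      proof
        fix b
        have "e j b = 0" using ej by simp
        then show "c j b = c' j b" unfolding e_def by simp
      qed
    qed
  qed
  have setEq: "{(a, i). a < 2 ^ n \<and> (\<lambda>i'. bitv a (m i')) \<in> hamming_code w col \<and> i \<in> {1..N}}
      = {a. a < 2^n \<and> (hsetup.syn N w m col) a = 0} \<times> {1..N}"
    using hsetup.ham_iff[OF HS] by auto
  have part2: "real (card {(a, i). a < 2 ^ n \<and> (\<lambda>i'. bitv a (m i')) \<in> hamming_code w col \<and> i \<in> {1..N}})
      = real h * 2 ^ n / (real d - real k + real h)"
    unfolding setEq by (rule real_arith[OF hsetup.count_real[OF HS] A(9) hN kd])
  have part4: "hd_optimal_repair n k (2 ^ n) h d (hadamard_msr_code n k lam)"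
    unfolding hd_optimal_repair_def
  proof (intro allI impI)
    fix H' R' :: "nat set"
    assume HR: "H' \<subseteq> {1..n} \<and> card H' = h \<and> R' \<subseteq> {1..n} - H' \<and> card R' = d"
    then have H'n: "H' \<subseteq> {1..n}" and cH': "card H' = h" and R': "R' \<subseteq> {1..n} - H'" and cR': "card R' = d"
      by auto
    have finH': "finite H'" using H'n finite_subset by blast
    obtain P' m' where P': "\<forall>i\<in>{1..N}. card (P' i) \<le> d - k"
      "\<forall>i\<in>{1..N}. \<forall>i'\<in>{1..N}. i \<noteq> i' \<longrightarrow> P' i \<inter> P' i' = {}"
      "(\<Union>i\<in>{1..N}. P' i) = H'" "\<forall>i\<in>{1..N}. m' i \<in> P' i"
      using partition_exists[OF finH' _ dpos, of N] cH' hN by blast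
    have P'sub: "\<forall>i\<in>{1..N}. P' i \<subseteq> {1..n}" using P'(3) H'n by blast
    have HS': "hsetup n N w P' m' col"
      unfolding hsetup_def using A(9) A(20) P'sub P'(2) P'(4) by auto
    define D where "D = {a. a < 2^n \<and> (hsetup.syn N w m' col) a = 0} \<times> {1..N}"
    have finD: "finite D" unfolding D_def by simp
    obtain enum where enum: "bij_betw enum {0..<card D} D" using ex_bij_betw_nat_finite[OF finD] by blast
    define g :: "nat \<Rightarrow> (nat \<Rightarrow> 'a) \<Rightarrow> nat \<Rightarrow> 'a" where
      "g = (\<lambda>j f t. f (fst (enum t)) + f ((hsetup.flip n P') (snd (enum t)) (fst (enum t))))"
    show "\<exists>(s::nat) (g :: nat \<Rightarrow> (nat \<Rightarrow> 'a) \<Rightarrow> nat \<Rightarrow> 'a).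
         real s = real h * real ((2::nat) ^ n) / (real d - real k + real h) \<and>
         (\<forall>c\<in>hadamard_msr_code n k lam. \<forall>c'\<in>hadamard_msr_code n k lam.
            (\<forall>j\<in>R'. \<forall>t<s. g j (c j) t = g j (c' j) t) \<longrightarrow> (\<forall>j\<in>H'. c j = c' j))"
    proof (intro exI conjI)
      show "real (card D) = real h * real ((2::nat) ^ n) / (real d - real k + real h)"
        unfolding D_def using real_arith[OF hsetup.count_real[OF HS'] A(9) hN kd] by simp
      show "\<forall>c\<in>hadamard_msr_code n k lam. \<forall>c'\<in>hadamard_msr_code n k lam.
            (\<forall>j\<in>R'. \<forall>t<card D. g j (c j) t = g j (c' j) t) \<longrightarrow> (\<forall>j\<in>H'. c j = c' j)"
      proof (intro ballI impI)
        fix c c' j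
        assume c: "c \<in> hadamard_msr_code n k lam" and c': "c' \<in> hadamard_msr_code n k lam"
          and hyp: "\<forall>j\<in>R'. \<forall>t<card D. g j (c j) t = g j (c' j) t" and j: "j \<in> H'"
        define e where "e = (\<lambda>j a. c j a - c' j a)"
        have e: "e \<in> hadamard_msr_code n k lam" unfolding e_def by (rule code_diff[OF c c'])
        have dl: "\<forall>j\<in>R'. \<forall>a<2^n. (hsetup.syn N w m' col) a = 0 \<longrightarrow> (\<forall>i\<in>{1..N}. e j a + e j ((hsetup.flip n P') i a) = 0)"
        proof (intro ballI allI impI)
          fix j a i assume j: "j \<in> R'" and a: "a < 2^n" and sa: "(hsetup.syn N w m' col) a = 0" and i: "i \<in> {1..N}"
          have "(a, i) \<in> D" unfolding D_def using a sa i by simp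
          then have "(a, i) \<in> enum ` {0..<card D}" using enum unfolding bij_betw_def by simp
          then obtain t where t: "t < card D" "enum t = (a, i)" by auto
          have "g j (c j) t = g j (c' j) t" using hyp j t(1) by blast
          then have "c j a + c j ((hsetup.flip n P') i a) = c' j a + c' j ((hsetup.flip n P') i a)"
            unfolding g_def t(2) by simp
          then show "e j a + e j ((hsetup.flip n P') i a) = 0" unfolding e_def by (simp add: algebra_simps)
        qed
        have "\<forall>j\<in>H'. e j = (\<lambda>_. 0)"
          by (rule hsetup.repair_zero[OF HS' A(11) kd H'n R' cR' P'(1) P'(3) e dl])
        then have "e j = (\<lambda>_. 0)" using j by blast
        then show "c j = c' j"
    proof -
      assume ej: "e j = (\<lambda>_. 0)"
      show ?thesis
      proof
        fix b
        have "e j b = 0" using ej by simp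
        then show "c j b = c' j b" unfolding e_def by simp
      qed
    qed
      qed
    qed
  qed
  have part3: "real d * real (card {(a, i). a < 2 ^ n \<and> (\<lambda>i'. bitv a (m i')) \<in> hamming_code w col \<and> i \<in> {1..N}})
      = real d * real h * 2 ^ n / (real d - real k + real h)"
    by (simp only: part2 times_divide_eq_right mult.assoc)
  show ?thesis
    unfolding N_def[symmetric]
    using part1 part2 part3 part4 by blast
qed

end
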